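(* Let $0\le\gamma<\alpha<\infty$. There exists a constant $C(\gamma,\alpha)>0$ such that for all $\zeta\in\overline{\mathbb{D}}$ and all $0<r<1$, $$D^{-\gamma}\frac{1}{|1-r\zeta|^{\alpha}}\le\frac{C(\gamma,\alpha)}{|1-r\zeta|^{\alpha-\gamma}},$$ where the fractional integral is taken in the variable $r$ (with $\zeta$ fixed).
   Context: $\mathbb{D}$ is the open unit disk. For a function $u$ integrable on $(0,a)$ and $\gamma>0$, the Riemann–Liouville fractional integral is $D^{-\gamma}u(r)=\frac{1}{\Gamma(\gamma)}\int_0^r (r-x)^{\gamma-1}u(x)\,dx$, $0<r<a$; and $D^{0}u=u$. Thus for $\gamma>0$ the left-hand side equals $\frac{1}{\Gamma(\gamma)}\int_0^r (r-x)^{\gamma-1}|1-x\zeta|^{-\alpha}\,dx$. *)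

theory Defs
  imports "HOL-Analysis.Analysis"
begin

definition frac_int :: "real \<Rightarrow> (real \<Rightarrow> real) \<Rightarrow> real \<Rightarrow> real" where
  "frac_int \<gamma> u r =
     (if \<gamma> = 0 then u r
      else (1 / Gamma \<gamma>) * (LBINT x:{0..r}. (r - x) powr (\<gamma> - 1) * u x))"

end

theory Submission imports Defs begin

lemma L1:
  fixes e c r :: real
  assumes "e > -1" "c \<le> r"
  shows "((\<lambda>x. (r - x) powr e) has_integral (r - c) powr (e+1) / (e+1)) {c..r}"
proof -
  have "((\<lambda>x. x powr e) has_integral (r - c) powr (e+1) / (e+1)) {0..r-c}"
    using has_integral_powr_from_0[of e "r-c"] assms by simp
  hence "((\<lambda>x. (-x) powr e) has_integral (r - c) powr (e+1) / (e+1)) {-(r-c)..-0}"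
    by (rule has_integral_reflect_lemma_real)
  hence "((\<lambda>x. (-(x + -r)) powr e) has_integral (r - c) powr (e+1) / (e+1)) {-(r-c) - -r..-0 - -r}"
    by (rule has_integral_shift_real_ivl)
  thus ?thesis by simp
qed

lemma L2:
  fixes e c r :: real
  assumes "e < -1" "0 \<le> c" "c < r"
  shows "((\<lambda>x. (r - x) powr e) has_integral (r powr (e+1) - (r - c) powr (e+1)) / (e+1)) {0..c}"
proof -
  define F where "F = (\<lambda>x. -((r - x) powr (e+1)) / (e+1))"
  have "((\<lambda>x. (r - x) powr e) has_integral (F c - F 0)) {0..c}"
  proof (rule fundamental_theorem_of_calculus)
    show "0 \<le> c" by fact
    fix x assume x: "x \<in> {0..c}"
    hence "r - x > 0" using assms by auto
    thus "(F has_vector_derivative (r - x) powr e) (at x within {0..c})"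
      using assms unfolding F_def
      by (auto intro!: derivative_eq_intros simp flip: has_real_derivative_iff_has_vector_derivative)
  qed
  moreover have "F c - F 0 = (r powr (e+1) - (r - c) powr (e+1)) / (e+1)"
    unfolding F_def by (simp add: diff_divide_distrib)
  ultimately show ?thesis by metis
qed

lemma main_bound:
  fixes \<gamma> \<alpha> r a :: real and f :: "real \<Rightarrow> real"
  assumes g: "0 < \<gamma>" "\<gamma> < \<alpha>" and a: "0 < a" and r: "0 < r"
    and fint: "f integrable_on {0..r}"
    and b1: "\<And>x. x \<in> {0..r} \<Longrightarrow> f x \<le> (r - x) powr (\<gamma> - 1) * a powr (-\<alpha>)"
    and b2: "\<And>x. x \<in> {0..r} \<Longrightarrow> r - x \<ge> a \<Longrightarrow> f x \<le> (r - x) powr (\<gamma> - 1 - \<alpha>)"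
  shows "integral {0..r} f \<le> a powr (\<gamma> - \<alpha>) * (1/\<gamma> + 1/(\<alpha> - \<gamma>))"
proof -
  have p1: "a powr (-\<alpha>) * a powr \<gamma> / \<gamma> = a powr (\<gamma> - \<alpha>) / \<gamma>"
    by (simp add: powr_add[symmetric])
  have piece1: "integral {c..r} f \<le> a powr (\<gamma> - \<alpha>) / \<gamma>"
    if c: "0 \<le> c" "c \<le> r" "r - c \<le> a" for c
  proof -
    have hi: "((\<lambda>x. (r - x) powr (\<gamma> - 1) * a powr (-\<alpha>)) has_integral
        ((r - c) powr \<gamma> / \<gamma>) * a powr (-\<alpha>)) {c..r}"
      using has_integral_mult_left[OF L1[of "\<gamma> - 1" c r]] g c by simp
    have "integral {c..r} f \<le> ((r - c) powr \<gamma> / \<gamma>) * a powr (-\<alpha>)"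
      using integral_le[OF integrable_on_subinterval[OF fint] has_integral_integrable[OF hi]]
        integral_unique[OF hi] b1 c by auto
    also have "\<dots> \<le> (a powr \<gamma> / \<gamma>) * a powr (-\<alpha>)"
      using c g by (intro mult_right_mono divide_right_mono powr_mono2) auto
    also have "\<dots> = a powr (\<gamma> - \<alpha>) / \<gamma>" using p1 by (simp add: field_simps)
    finally show ?thesis .
  qed
  have pos1: "0 \<le> a powr (\<gamma> - \<alpha>) / (\<alpha> - \<gamma>)" using g by simp
  show ?thesis
  proof (cases "r \<le> a")
    case True
    have "integral {0..r} f \<le> a powr (\<gamma> - \<alpha>) / \<gamma>" using piece1[of 0] True r by simp
    thus ?thesis using pos1 by (simp add: field_simps)
  next
    case False
    define c where "c = r - a"
    have c: "0 \<le> c" "c < r" "r - c = a" using False a unfolding c_def by auto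
    have hi: "((\<lambda>x. (r - x) powr (\<gamma> - 1 - \<alpha>)) has_integral
        (r powr (\<gamma> - 1 - \<alpha> + 1) - (r - c) powr (\<gamma> - 1 - \<alpha> + 1)) / (\<gamma> - 1 - \<alpha> + 1)) {0..c}"
      using L2[of "\<gamma> - 1 - \<alpha>" c r] g c by simp
    have "integral {0..c} f \<le> (r powr (\<gamma> - 1 - \<alpha> + 1) - (r - c) powr (\<gamma> - 1 - \<alpha> + 1)) / (\<gamma> - 1 - \<alpha> + 1)"
      using integral_le[OF integrable_on_subinterval[OF fint] has_integral_integrable[OF hi]]
        integral_unique[OF hi] b2 c by auto
    also have "\<dots> = (a powr (\<gamma> - \<alpha>) - r powr (\<gamma> - \<alpha>)) / (\<alpha> - \<gamma>)"
      using c g by (simp add: field_simps)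
    also have "\<dots> \<le> a powr (\<gamma> - \<alpha>) / (\<alpha> - \<gamma>)"
      using g by (intro divide_right_mono) auto
    finally have A: "integral {0..c} f \<le> a powr (\<gamma> - \<alpha>) / (\<alpha> - \<gamma>)" .
    have B: "integral {c..r} f \<le> a powr (\<gamma> - \<alpha>) / \<gamma>" using piece1[of c] c by simp
    have "integral {0..r} f = integral {0..c} f + integral {c..r} f"
      using Henstock_Kurzweil_Integration.integral_combine[OF c(1) _ fint] c by simp
    thus ?thesis using A B by (simp add: field_simps)
  qed
qed

lemma pointwise:
  fixes \<zeta> :: complex and r x :: real
  assumes z: "norm \<zeta> \<le> 1" and r: "r < 1" and x: "0 \<le> x" "x \<le> r"
  shows "norm (1 - complex_of_real x * \<zeta>) > 0"
    "r - x \<le> norm (1 - complex_of_real x * \<zeta>)"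
    "norm (1 - complex_of_real r * \<zeta>) \<le> 2 * norm (1 - complex_of_real x * \<zeta>)"
proof -
  have nx: "norm (complex_of_real x * \<zeta>) \<le> x"
    using z x by (simp add: norm_mult mult_left_le)
  have "norm (1::complex) - norm (complex_of_real x * \<zeta>) \<le> norm (1 - complex_of_real x * \<zeta>)"
    by (rule norm_triangle_ineq2)
  hence N: "1 - x \<le> norm (1 - complex_of_real x * \<zeta>)" using nx by simp
  thus "norm (1 - complex_of_real x * \<zeta>) > 0" "r - x \<le> norm (1 - complex_of_real x * \<zeta>)"
    using r x by auto
  have "1 - complex_of_real r * \<zeta> = (1 - complex_of_real x * \<zeta>) - complex_of_real (r - x) * \<zeta>"
    by (simp add: algebra_simps)
  hence "norm (1 - complex_of_real r * \<zeta>) \<le> norm (1 - complex_of_real x * \<zeta>) + norm (complex_of_real (r - x) * \<zeta>)"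
    by (metis norm_triangle_ineq4)
  also have "norm (complex_of_real (r - x) * \<zeta>) = \<bar>r - x\<bar> * norm \<zeta>"
    by (simp only: norm_mult norm_of_real)
  also have "\<dots> \<le> r - x"
    using z x by (simp add: mult_left_le)
  finally show "norm (1 - complex_of_real r * \<zeta>) \<le> 2 * norm (1 - complex_of_real x * \<zeta>)"
    using N r x by linarith
qed

theorem lemma2:
  fixes \<gamma> \<alpha> :: real
  assumes "0 \<le> \<gamma>" and "\<gamma> < \<alpha>"
  shows "\<exists>C>0. \<forall>\<zeta>::complex. \<forall>r::real. norm \<zeta> \<le> 1 \<longrightarrow> 0 < r \<longrightarrow> r < 1 \<longrightarrow>
           frac_int \<gamma> (\<lambda>x. 1 / norm (1 - complex_of_real x * \<zeta>) powr \<alpha>) r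
             \<le> C / norm (1 - complex_of_real r * \<zeta>) powr (\<alpha> - \<gamma>)"
proof (cases "\<gamma> = 0")
  case True
  show ?thesis
    by (rule exI[of _ 1]) (simp add: frac_int_def True)
next
  case False
  hence g: "0 < \<gamma>" "\<gamma> < \<alpha>" using assms by auto
  have Gp: "Gamma \<gamma> > 0" using g by (simp add: Gamma_real_pos)
  define C where "C = 2 powr (\<alpha> - \<gamma>) * (1/\<gamma> + 1/(\<alpha> - \<gamma>)) / Gamma \<gamma>"
  have Cp: "C > 0" using g Gp unfolding C_def by (simp add: add_pos_pos)
  show ?thesis
  proof (rule exI[of _ C], intro conjI allI impI Cp)
    fix \<zeta> :: complex and r :: real
    assume z: "norm \<zeta> \<le> 1" and r0: "0 < r" and r1: "r < 1"
    define d where "d = norm (1 - complex_of_real r * \<zeta>)"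
    define a where "a = d / 2"
    have dp: "d > 0" using pointwise(1)[OF z r1, of r] r0 unfolding d_def by simp
    hence ap: "a > 0" unfolding a_def by simp
    define f where "f = (\<lambda>x. (r - x) powr (\<gamma> - 1) * (1 / norm (1 - complex_of_real x * \<zeta>) powr \<alpha>))"
    define B where "B = a powr (\<gamma> - \<alpha>) * (1/\<gamma> + 1/(\<alpha> - \<gamma>))"
    have Bp: "B \<ge> 0" unfolding B_def using g by simp
    have key: "(LBINT x:{0..r}. f x) \<le> B"
    proof (cases "set_integrable lborel {0..r} f")
      case False
      thus ?thesis using Bp
        by (simp add: set_lebesgue_integral_def set_integrable_def not_integrable_integral_eq)
    next
      case True
      have fi: "f integrable_on {0..r}" and eq: "(LBINT x:{0..r}. f x) = integral {0..r} f"
        using set_borel_integral_eq_integral[OF True] by auto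
      have "integral {0..r} f \<le> B" unfolding B_def
      proof (rule main_bound[OF g ap r0 fi])
        fix x assume x: "x \<in> {0..r}"
        define N where "N = norm (1 - complex_of_real x * \<zeta>)"
        have Np: "N > 0" and N1: "r - x \<le> N" and N2: "a \<le> N"
          using pointwise[OF z r1, of x] x unfolding N_def a_def d_def by auto
        have "1 / N powr \<alpha> \<le> 1 / a powr \<alpha>"
          using Np N2 ap g by (intro divide_left_mono powr_mono2 mult_pos_pos) auto
        hence "1 / N powr \<alpha> \<le> a powr (-\<alpha>)" by (simp add: powr_minus_divide)
        thus "f x \<le> (r - x) powr (\<gamma> - 1) * a powr (-\<alpha>)"
          unfolding f_def N_def[symmetric] by (intro mult_left_mono) auto
        assume ra: "r - x \<ge> a"
        have "1 / N powr \<alpha> \<le> 1 / (r - x) powr \<alpha>"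
          using Np N1 ap ra g by (intro divide_left_mono powr_mono2 mult_pos_pos) auto
        hence "f x \<le> (r - x) powr (\<gamma> - 1) * (1 / (r - x) powr \<alpha>)"
          unfolding f_def N_def[symmetric] by (intro mult_left_mono) auto
        also have "\<dots> = (r - x) powr (\<gamma> - 1 - \<alpha>)"
          using ra ap by (simp add: powr_diff)
        finally show "f x \<le> (r - x) powr (\<gamma> - 1 - \<alpha>)" .
      qed
      thus ?thesis using eq by simp
    qed
    have "frac_int \<gamma> (\<lambda>x. 1 / norm (1 - complex_of_real x * \<zeta>) powr \<alpha>) r
        = (1 / Gamma \<gamma>) * (LBINT x:{0..r}. f x)"
      unfolding frac_int_def f_def using g by simp
    also have "\<dots> \<le> (1 / Gamma \<gamma>) * B"
      using key Gp by (intro mult_left_mono) auto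
    also have "\<dots> = C / d powr (\<alpha> - \<gamma>)"
    proof -
      have "a powr (\<gamma> - \<alpha>) = 2 powr (\<alpha> - \<gamma>) / d powr (\<alpha> - \<gamma>)"
        unfolding a_def using dp
        by (simp add: powr_divide powr_minus_divide[symmetric] powr_diff field_simps)
      thus ?thesis unfolding B_def C_def by (simp add: field_simps)
    qed
    finally show "frac_int \<gamma> (\<lambda>x. 1 / norm (1 - complex_of_real x * \<zeta>) powr \<alpha>) r
             \<le> C / norm (1 - complex_of_real r * \<zeta>) powr (\<alpha> - \<gamma>)" unfolding d_def .
  qed
qed

end
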